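(* Let $L\geq1$ be an integer, $P\geq0$, $p_B\in[0,1]$, and $\alpha\sim\mathrm{Binomial}(L,1-p_B)$. For integers $i\geq0$ let $\bar R(i):=\mathbb{E}\big[\log\big(1+|\sum_{l=1}^i e^{j\theta_l}|^2P\big)\big]$ with $\theta_1,\theta_2,\ldots$ i.i.d. $\mathrm{Uniform}(0,2\pi)$, and let $\bar R_{\mathrm{out}}:=\sup_{r\in\mathbb{R}}r\cdot\mathbb{P}(\bar R(\alpha)\geq r)$. Then $$\bar R_{\mathrm{out}}\geq\mathbb{P}(\alpha\geq1)\bar R(1)=(1-p_B^L)\log(1+P).$$
   Context: $\bar R$ is a deterministic function (expectation over the $\theta_l$ only). $\log$ is the logarithm in a fixed base. *)

theory Defs
  imports "HOL-Probability.Probability"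
begin

definition Rbar :: "real \<Rightarrow> real \<Rightarrow> nat \<Rightarrow> real" where
  "Rbar b P i =
     (\<integral>\<theta>. log b (1 + (cmod (\<Sum>l\<in>{1..i}. cis (\<theta> l)))\<^sup>2 * P)
        \<partial>(PiM {1..i} (\<lambda>_. uniform_measure lborel {0..2*pi})))"

definition Rout :: "real \<Rightarrow> real \<Rightarrow> nat \<Rightarrow> real \<Rightarrow> real" where
  "Rout b P L pB =
     (SUP r\<in>(UNIV::real set). r * measure_pmf.prob (binomial_pmf L (1 - pB)) {k. Rbar b P k \<ge> r})"

end

theory Submission imports Defs "HOL-Complex_Analysis.Complex_Analysis" begin

lemma mean_ln:
  fixes w :: complex assumes w: "norm w < 1"
  shows "((\<lambda>t. ln (cmod (1 + w * cis t))) has_integral 0) {0..2*pi}"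
proof -
  define f where "f = (\<lambda>u. Ln (1 + w * u))"
  have nz: "1 + w * u \<notin> \<real>\<^sub>\<le>\<^sub>0" if "u \<in> cball 0 1" for u
  proof
    assume "1 + w * u \<in> \<real>\<^sub>\<le>\<^sub>0"
    then obtain r where r: "1 + w*u = of_real r" "r \<le> 0" by (auto simp: nonpos_Reals_def)
    then have "Re (1 + w*u) \<le> 0" by (metis Re_complex_of_real)
    moreover have "norm (w*u) < 1" using that w
      by (simp add: norm_mult) (metis mult_le_one norm_ge_zero less_le_trans mult_left_le order_le_less_trans mult_less_cancel_right1)
    moreover have "\<bar>Re (w*u)\<bar> \<le> norm (w*u)" by (rule abs_Re_le_cmod)
    ultimately show False by simp
  qed
  have hol: "f holomorphic_on cball 0 1" unfolding f_def
    by (intro holomorphic_intros nz) auto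
  have "((\<lambda>u. f u/(u-0)) has_contour_integral (2 * of_real pi * \<i> * f 0)) (circlepath 0 1)"
    by (rule Cauchy_integral_circlepath_simple[OF hol]) simp
  then have "((\<lambda>u. f u/(u-0)) has_contour_integral 0) (circlepath 0 1)"
    by (simp add: f_def)
  then have "((\<lambda>t. f (0 + 1 * cis t)/(0 + 1 * cis t - 0) * 1 * \<i> * cis t) has_integral 0) {0..2*pi}"
    unfolding circlepath_def by (subst (asm) has_contour_integral_part_circlepath_iff) auto
  then have "((\<lambda>t. \<i> * Ln (1 + w * cis t)) has_integral 0) {0..2*pi}"
    by (simp add: f_def field_simps cis_neq_zero)
  from has_integral_linear[OF this bounded_linear_Im]
  have "((\<lambda>t. Re (Ln (1 + w * cis t))) has_integral 0) {0..2*pi}"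
    by (simp add: o_def)
  moreover have "1 + w * cis t \<noteq> 0" for t
    using nz[of "cis t"] by auto
  ultimately show ?thesis by simp
qed

lemma unif_integral:
  fixes h :: "real \<Rightarrow> real"
  assumes c: "continuous_on UNIV h" and hi: "(h has_integral I) {0..2*pi}"
  shows "integral\<^sup>L (uniform_measure lborel {0..2*pi}) h = I / (2*pi)"
proof -
  have e: "emeasure lborel {0..2*pi} = ennreal (2*pi)" by simp
  have d: "uniform_measure lborel {0..2*pi} = density lborel (\<lambda>x. ennreal (indicator {0..2*pi} x / (2*pi)))"
  proof -
    have o: "1 / ennreal (2*pi) = ennreal (1/(2*pi))" using divide_ennreal[of 1 "2*pi"] by simp
    show ?thesis unfolding uniform_measure_def e
    by (intro arg_cong[where f="density lborel"] ext) (auto simp: indicator_def o)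
  qed
  have hm: "h \<in> borel_measurable lborel"
    using c by (simp add: borel_measurable_continuous_onI)
  have "integral\<^sup>L (uniform_measure lborel {0..2*pi}) h
      = (\<integral>x. (indicator {0..2*pi} x / (2*pi)) *\<^sub>R h x \<partial>lborel)"
    unfolding d by (rule integral_density[OF hm]) auto
  also have "\<dots> = (\<integral>x. (indicator {0..2*pi} x *\<^sub>R h x) / (2*pi) \<partial>lborel)"
    by (intro Bochner_Integration.integral_cong) auto
  also have "\<dots> = (\<integral>x. indicator {0..2*pi} x *\<^sub>R h x \<partial>lborel) / (2*pi)"
    by (rule integral_divide_zero)
  also have "(\<integral>x. indicator {0..2*pi} x *\<^sub>R h x \<partial>lborel) = (LINT x : {0..2*pi} | lborel. h x)"
    by (simp add: set_lebesgue_integral_def)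
  also have "\<dots> = integral {0..2*pi} h"
    by (rule set_borel_integral_eq_integral(2)[OF borel_integrable_atLeastAtMost'])
       (rule continuous_on_subset[OF c], auto)
  also have "\<dots> = I" using hi by (rule integral_unique)
  finally show ?thesis .
qed
lemma ident:
  fixes s e :: complex and P c :: real
  assumes e: "cmod e = 1" and c: "c > 0"
    and q: "c^2 - (1 + P + P*(cmod s)^2) * c + P^2 * (cmod s)^2 = 0"
  shows "1 + (cmod (s + e))^2 * P = c * (cmod (1 + (of_real P * cnj s / of_real c) * e))^2"
proof -
  have ee: "e * cnj e = 1" using complex_norm_square[of e] e by simp
  have q0: "of_real c ^2 - (1 + of_real P + of_real P * of_real ((cmod s)^2)) * of_real c + of_real P ^2 * of_real ((cmod s)^2) = (0::complex)"
    using arg_cong[OF q, of complex_of_real] by simp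
  have q': "of_real c ^2 - (1 + of_real P + of_real P * (s * cnj s)) * of_real c + of_real P ^2 * (s * cnj s) = (0::complex)"
    using q0 unfolding complex_norm_square .
  have "complex_of_real (1 + (cmod (s + e))^2 * P) = 1 + (s+e)*(cnj s + cnj e) * of_real P"
    by (simp only: of_real_add of_real_mult of_real_1 complex_norm_square complex_cnj_add)
  also have "\<dots> = of_real c * ((1 + (of_real P * cnj s / of_real c) * e) * (1 + (of_real P * s / of_real c) * cnj e))"
  proof -
    have cz: "complex_of_real c \<noteq> 0" using c by simp
    have "of_real c * ((1 + (of_real P * cnj s / of_real c) * e) * (1 + (of_real P * s / of_real c) * cnj e))
       = of_real c + of_real P * cnj s * e + of_real P * s * cnj e + of_real P ^2 * (s * cnj s) * (e * cnj e) / of_real c"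
      using cz by (simp add: field_simps power2_eq_square)
    also have "\<dots> = of_real c + of_real P * cnj s * e + of_real P * s * cnj e + of_real P ^2 * (s * cnj s) / of_real c"
      by (simp add: ee)
    also have "of_real P ^2 * (s * cnj s) / of_real c = (1 + of_real P + of_real P * (s * cnj s)) - of_real c"
      using cz q' by (simp add: field_simps power2_eq_square) (simp add: algebra_simps)?
    finally show ?thesis using ee by (simp add: algebra_simps)
  qed
  also have "\<dots> = complex_of_real (c * (cmod (1 + (of_real P * cnj s / of_real c) * e))^2)"
    by (simp only: of_real_mult complex_norm_square) simp
  finally show ?thesis by (simp only: of_real_eq_iff)
qed

definition cf :: "real \<Rightarrow> real \<Rightarrow> real" where
  "cf P n = ((1 + P + P*n^2) + sqrt ((1 + P + P*n^2)^2 - 4*P^2*n^2)) / 2"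

lemma cf_props:
  assumes P: "P \<ge> 0" and n: "n \<ge> 0"
  shows "cf P n > 0" "P * n < cf P n" "cf P n \<ge> 1 + P"
    "(cf P n)^2 - (1 + P + P*n^2) * cf P n + P^2 * n^2 = 0"
proof -
  define A where "A = 1 + P + P*n^2"
  define D where "D = A^2 - 4*P^2*n^2"
  have a1: "A - 2*P*n = 1 + P*(1-n)^2" unfolding A_def by (simp add: power2_eq_square algebra_simps)
  have a1p: "A - 2*P*n > 0" unfolding a1 using P by (simp add: add_pos_nonneg)
  have a2p: "A + 2*P*n > 0" using a1p mult_nonneg_nonneg[OF P n] by linarith
  have Dp: "D > 0" using mult_pos_pos[OF a1p a2p] unfolding D_def by (simp add: power2_eq_square algebra_simps)
  have c: "cf P n = (A + sqrt D) / 2" unfolding cf_def A_def D_def ..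
  have sD: "sqrt D > 0" using Dp by simp
  have pn: "2*P*n \<ge> 0" using P n by simp
  have s1: "A + sqrt D > 0" using sD a1p pn by linarith
  have s2: "2*P*n < A + sqrt D" using sD a1p pn by linarith
  show "cf P n > 0" unfolding c using s1 by simp
  show "P * n < cf P n" unfolding c using s2 by simp
  have sq: "(sqrt D)^2 = D" using Dp by simp
  show "(cf P n)^2 - (1 + P + P*n^2) * cf P n + P^2 * n^2 = 0"
    unfolding c A_def[symmetric] using sq unfolding D_def by (simp add: power2_eq_square field_simps)
  show "cf P n \<ge> 1 + P"
  proof (cases "1 + P - P*n^2 \<le> 0")
    case True
    have "2 + 2*P \<le> A + sqrt D" using True sD unfolding A_def by linarith
    then show ?thesis unfolding c by simp
  next
    case False
    have "D - (1 + P - P*n^2)^2 = 4*P*n^2" unfolding D_def A_def by (simp add: power2_eq_square algebra_simps)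
    moreover have "4*P*n^2 \<ge> 0" using P by simp
    ultimately have "(1 + P - P*n^2)^2 \<le> (sqrt D)^2" unfolding sq by linarith
    then have "1 + P - P*n^2 \<le> sqrt D" using sq by (intro real_le_rsqrt) simp
    then have "2 + 2*P \<le> A + sqrt D" unfolding A_def by linarith
    then show ?thesis unfolding c by simp
  qed
qed

lemma inner:
  fixes s :: complex
  assumes b: "b > 1" and P: "P \<ge> 0"
  shows "integral\<^sup>L (uniform_measure lborel {0..2*pi}) (\<lambda>y. log b (1 + (cmod (s + cis y))^2 * P))
       = log b (cf P (cmod s))"
proof -
  define c where "c = cf P (cmod s)"
  note cp = cf_props[OF P norm_ge_zero[of s], folded c_def]
  define w where "w = of_real P * cnj s / of_real c"
  have nw: "norm w < 1" unfolding w_def using cp(1,2) P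
    by (simp add: norm_mult norm_divide)
  have nz: "1 + w * cis y \<noteq> 0" for y
  proof
    assume "1 + w * cis y = 0"
    then have "w * cis y = -1" by (simp add: add_eq_0_iff)
    then have "norm (w * cis y) = 1" by simp
    then show False using nw by (simp add: norm_mult)
  qed
  have eq: "log b (1 + (cmod (s + cis y))^2 * P) = log b c + (2 / ln b) * ln (cmod (1 + w * cis y))" for y
  proof -
    have "1 + (cmod (s + cis y))^2 * P = c * (cmod (1 + w * cis y))^2"
      unfolding w_def by (rule ident) (use cp in auto)
    then have "log b (1 + (cmod (s + cis y))^2 * P) = log b c + log b ((cmod (1 + w * cis y))^2)"
      using cp(1) nz[of y] by (simp add: log_mult)
    also have "log b ((cmod (1 + w * cis y))^2) = 2 * log b (cmod (1 + w * cis y))"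
      using nz[of y] by (simp add: log_nat_power)
    finally show ?thesis by (simp add: log_def)
  qed
  have hi: "((\<lambda>y. log b (1 + (cmod (s + cis y))^2 * P)) has_integral (2*pi) * log b c) {0..2*pi}"
  proof -
    have "((\<lambda>y. log b c + (2 / ln b) * ln (cmod (1 + w * cis y))) has_integral (log b c * (2*pi) + (2 / ln b) * 0)) {0..2*pi}"
      by (intro has_integral_add has_integral_mult_right mean_ln nw)
         (use has_integral_const_real[of "log b c" 0 "2*pi"] in \<open>simp add: mult.commute\<close>)
    moreover have E: "(\<lambda>y. log b (1 + (cmod (s + cis y))^2 * P)) = (\<lambda>y. log b c + (2 / ln b) * ln (cmod (1 + w * cis y)))"
      using eq by (intro ext) simp
    ultimately show ?thesis unfolding E by (simp add: mult.commute)
  qed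
  have cont: "continuous_on UNIV (\<lambda>y. log b (1 + (cmod (s + cis y))^2 * P))"
  proof -
    have pos: "1 + (cmod (s+cis y))^2 * P > 0" for y using P by (simp add: add_pos_nonneg)
    show ?thesis using pos b by (intro continuous_intros) (auto simp: less_imp_neq[OF pos, symmetric])
  qed
  show ?thesis using unif_integral[OF cont hi] by (simp add: c_def)
qed


abbreviation U :: "real measure" where "U \<equiv> uniform_measure lborel {0..2*pi}"

lemma U_prob: "prob_space U"
  by (rule prob_space_uniform_measure) auto

lemma cis_meas[measurable]: "f \<in> borel_measurable M \<Longrightarrow> (\<lambda>x. cis (f x)) \<in> borel_measurable M"
proof -
  have "continuous_on UNIV (\<lambda>x::real. cis x)" by (intro continuous_on_cis continuous_on_id)
  then have "cis \<in> borel_measurable borel" by (rule borel_measurable_continuous_onI)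
  moreover assume "f \<in> borel_measurable M"
  ultimately show ?thesis by (rule measurable_compose[rotated])
qed

lemma PiU_prob: "prob_space (PiM I (\<lambda>_. U))"
  by (rule prob_space_PiM) (rule U_prob)

lemma cf_le:
  assumes P: "P \<ge> 0" and n: "n \<ge> 0"
  shows "cf P n \<le> 1 + P + P*n^2"
proof -
  define A where "A = 1 + P + P*n^2"
  have A0: "A \<ge> 0" unfolding A_def using P by simp
  have "sqrt (A^2 - 4*P^2*n^2) \<le> sqrt (A^2)" by (rule real_sqrt_le_mono) simp
  also have "\<dots> = A" using A0 by simp
  finally show ?thesis unfolding cf_def A_def[symmetric] by simp
qed

lemma sum_bound: "cmod (\<Sum>l\<in>I. cis (\<theta> l)) \<le> real (card I)"
proof -
  have "cmod (\<Sum>l\<in>I. cis (\<theta> l)) \<le> (\<Sum>l\<in>I. cmod (cis (\<theta> l)))" by (rule norm_sum)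
  also have "\<dots> = real (card I)" by simp
  finally show ?thesis .
qed

lemma Rbar_ge:
  assumes b: "b > 1" and P: "P \<ge> 0" and k: "k \<ge> 1"
  shows "Rbar b P k \<ge> log b (1 + P)"
proof -
  interpret UP: prob_space U by (rule U_prob)
  interpret PP: product_prob_space "\<lambda>_. U" "{}"
    by (simp add: product_prob_space_def product_sigma_finite_def product_prob_space_axioms_def
        UP.sigma_finite_measure_axioms UP.prob_space_axioms)
  interpret PI: prob_space "PiM {1..k-1} (\<lambda>_. U)" by (rule PiU_prob)
  interpret PK: prob_space "PiM {1..k} (\<lambda>_. U)" by (rule PiU_prob)
  define F where "F = (\<lambda>\<theta>. log b (1 + (cmod (\<Sum>l\<in>{1..k}. cis (\<theta> l)))\<^sup>2 * P))"
  have Fm: "F \<in> borel_measurable (PiM {1..k} (\<lambda>_. U))" unfolding F_def by measurable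
  have Fb: "norm (F \<theta>) \<le> log b (1 + real k ^2 * P)" for \<theta>
  proof -
    have c: "cmod (\<Sum>l\<in>{1..k}. cis (\<theta> l)) \<le> real k" using sum_bound[of \<theta> "{1..k}"] by simp
    have "(cmod (\<Sum>l\<in>{1..k}. cis (\<theta> l)))\<^sup>2 \<le> real k ^2" by (rule power_mono[OF c]) simp
    then have "(cmod (\<Sum>l\<in>{1..k}. cis (\<theta> l)))\<^sup>2 * P \<le> real k ^2 * P" using P by (rule mult_right_mono)
    moreover have "0 \<le> (cmod (\<Sum>l\<in>{1..k}. cis (\<theta> l)))\<^sup>2 * P" using P by simp
    ultimately show ?thesis unfolding F_def using b by (simp add: abs_if)
  qed
  have Fi: "integrable (PiM {1..k} (\<lambda>_. U)) F"
    by (rule PK.integrable_const_bound[where B="log b (1 + real k ^2 * P)"]) (use Fb Fm in auto)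
  have ins: "insert k {1..k-1} = {1..k}" using k by auto
  have "Rbar b P k = integral\<^sup>L (PiM (insert k {1..k-1}) (\<lambda>_. U)) F"
    unfolding Rbar_def F_def ins ..
  also have "\<dots> = (\<integral>x. (\<integral>y. F (x(k:=y)) \<partial>U) \<partial>PiM {1..k-1} (\<lambda>_. U))"
    by (rule PP.product_integral_insert) (use Fi ins in auto)
  also have "\<dots> = (\<integral>x. log b (cf P (cmod (\<Sum>l\<in>{1..k-1}. cis (x l)))) \<partial>PiM {1..k-1} (\<lambda>_. U))"
  proof (rule Bochner_Integration.integral_cong[OF refl])
    fix x
    have "(\<Sum>l\<in>{1..k}. cis ((x(k:=y)) l)) = (\<Sum>l\<in>{1..k-1}. cis (x l)) + cis y" for y
    proof -
      have "(\<Sum>l\<in>{1..k}. cis ((x(k:=y)) l)) = cis y + (\<Sum>l\<in>{1..k-1}. cis ((x(k:=y)) l))"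
        unfolding ins[symmetric] by (subst sum.insert) auto
      also have "(\<Sum>l\<in>{1..k-1}. cis ((x(k:=y)) l)) = (\<Sum>l\<in>{1..k-1}. cis (x l))"
        by (intro sum.cong) auto
      finally show ?thesis by simp
    qed
    then have "(\<integral>y. F (x(k:=y)) \<partial>U) = (\<integral>y. log b (1 + (cmod ((\<Sum>l\<in>{1..k-1}. cis (x l)) + cis y))\<^sup>2 * P) \<partial>U)"
      unfolding F_def by simp
    also have "\<dots> = log b (cf P (cmod (\<Sum>l\<in>{1..k-1}. cis (x l))))"
      by (rule inner[OF b P])
    finally show "(\<integral>y. F (x(k:=y)) \<partial>U) = log b (cf P (cmod (\<Sum>l\<in>{1..k-1}. cis (x l))))" .
  qed
  also have "\<dots> \<ge> (\<integral>x. log b (1 + P) \<partial>PiM {1..k-1} (\<lambda>_. U))"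
  proof (rule integral_mono)
    show "integrable (PiM {1..k-1} (\<lambda>_. U)) (\<lambda>x. log b (1 + P))" by (rule PI.integrable_const)
    show "integrable (PiM {1..k-1} (\<lambda>_. U)) (\<lambda>x. log b (cf P (cmod (\<Sum>l\<in>{1..k-1}. cis (x l)))))"
    proof (rule PI.integrable_const_bound[where B="log b (1 + P + P * real k ^2)"])
      show "(\<lambda>x. log b (cf P (cmod (\<Sum>l\<in>{1..k-1}. cis (x l))))) \<in> borel_measurable (PiM {1..k-1} (\<lambda>_. U))"
        unfolding cf_def by measurable
      show "AE x in PiM {1..k-1} (\<lambda>_. U). norm (log b (cf P (cmod (\<Sum>l\<in>{1..k-1}. cis (x l))))) \<le> log b (1 + P + P * real k ^2)"
      proof (rule AE_I2)
        fix x
        define n where "n = cmod (\<Sum>l\<in>{1..k-1}. cis (x l))"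
        have n0: "n \<ge> 0" unfolding n_def by simp
        have nk: "n \<le> real k" unfolding n_def using sum_bound[of x "{1..k-1}"] by simp
        have c1: "cf P n \<ge> 1 + P" by (rule cf_props(3)[OF P n0])
        have c2: "cf P n \<le> 1 + P + P * n^2" by (rule cf_le[OF P n0])
        have "n^2 \<le> real k ^2" by (rule power_mono[OF nk n0])
        then have "P * n^2 \<le> P * real k ^2" using P by (rule mult_left_mono)
        then have c3: "cf P n \<le> 1 + P + P * real k ^2" using c2 by linarith
        have "0 \<le> log b (cf P n)" using c1 P b by simp
        moreover have "log b (cf P n) \<le> log b (1 + P + P * real k ^2)" using c1 c3 P b by simp
        ultimately show "norm (log b (cf P (cmod (\<Sum>l\<in>{1..k-1}. cis (x l))))) \<le> log b (1 + P + P * real k ^2)"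
          unfolding n_def[symmetric] by simp
      qed
    qed
    fix x
    have "cf P (cmod (\<Sum>l\<in>{1..k-1}. cis (x l))) \<ge> 1 + P" by (rule cf_props(3)[OF P]) simp
    then show "log b (1 + P) \<le> log b (cf P (cmod (\<Sum>l\<in>{1..k-1}. cis (x l))))" using P b by simp
  qed
  also have "(\<integral>x. log b (1 + P) \<partial>PiM {1..k-1} (\<lambda>_. U)) = log b (1 + P)"
    using PI.prob_space by simp
  finally show ?thesis .
qed

lemma Rbar_1:
  assumes b: "b > 1" and P: "P \<ge> 0"
  shows "Rbar b P 1 = log b (1 + P)"
proof -
  interpret PK: prob_space "PiM {1..1::nat} (\<lambda>_. U)" by (rule PiU_prob)
  have "Rbar b P 1 = (\<integral>x. log b (1 + P) \<partial>PiM {1..1::nat} (\<lambda>_. U))"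
    unfolding Rbar_def by (rule Bochner_Integration.integral_cong[OF refl]) simp
  also have "\<dots> = log b (1 + P)" using PK.prob_space by simp
  finally show ?thesis .
qed


theorem corollary2:
  fixes b P pB :: real and L :: nat
  assumes "b > 1" and "L \<ge> 1" and "P \<ge> 0" and "0 \<le> pB" and "pB \<le> 1"
  shows "Rout b P L pB \<ge> measure_pmf.prob (binomial_pmf L (1 - pB)) {k. k \<ge> 1} * Rbar b P 1
     \<and> measure_pmf.prob (binomial_pmf L (1 - pB)) {k. k \<ge> 1} * Rbar b P 1 = (1 - pB ^ L) * log b (1 + P)"
proof -
  note b = assms(1) and P = assms(3)
  define p where "p = binomial_pmf L (1 - pB)"
  have q0: "0 \<le> 1 - pB" and q1: "1 - pB \<le> 1" using assms by auto
  have pmfp: "pmf p k = (L choose k) * (1-pB)^k * (1 - (1-pB))^(L - k)" for k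
    unfolding p_def by (rule pmf_binomial[OF q0 q1])
  have prob1: "measure_pmf.prob p {k. k \<ge> 1} = 1 - pB ^ L"
  proof -
    have "{k::nat. k \<ge> 1} = space (measure_pmf p) - {0}" by auto
    then have "measure_pmf.prob p {k. k \<ge> 1} = 1 - measure_pmf.prob p {0}"
      using measure_pmf.prob_compl[of "{0}" p] by simp
    also have "measure_pmf.prob p {0} = pB ^ L" by (simp add: measure_pmf_single pmfp)
    finally show ?thesis .
  qed
  define r0 where "r0 = log b (1 + P)"
  have r0: "r0 \<ge> 0" unfolding r0_def using b P by simp
  have R1: "Rbar b P 1 = r0" unfolding r0_def by (rule Rbar_1[OF b P])
  define B where "B = Max ((\<lambda>k. \<bar>Rbar b P k\<bar>) ` {..L})"
  have B: "\<bar>Rbar b P k\<bar> \<le> B" if "k \<le> L" for k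
    unfolding B_def using that by (intro Max_ge) auto
  have B0: "B \<ge> 0" using B[of 0] by simp
  have bdd: "bdd_above ((\<lambda>r. r * measure_pmf.prob p {k. Rbar b P k \<ge> r}) ` UNIV)"
  proof (rule bdd_aboveI2)
    fix r :: real
    show "r * measure_pmf.prob p {k. Rbar b P k \<ge> r} \<le> B"
    proof (cases "r \<le> B")
      case True
      have "measure_pmf.prob p {k. Rbar b P k \<ge> r} \<le> 1" by simp
      moreover have "measure_pmf.prob p {k. Rbar b P k \<ge> r} \<ge> 0" by simp
      ultimately show ?thesis using True B0
        by (cases "r \<le> 0") (auto intro: order_trans[OF mult_nonpos_nonneg] order_trans[OF mult_left_le])
    next
      case False
      have "set_pmf p \<inter> {k. Rbar b P k \<ge> r} = {}"
      proof (rule ccontr)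
        assume "set_pmf p \<inter> {k. Rbar b P k \<ge> r} \<noteq> {}"
        then obtain k where k1: "pmf p k \<noteq> 0" and k2: "Rbar b P k \<ge> r" by (auto simp: set_pmf_iff)
        have "k \<le> L"
        proof (rule ccontr)
          assume "\<not> k \<le> L"
          then have "pmf p k = 0" by (simp add: pmfp)
          then show False using k1 by simp
        qed
        then show False using B[of k] k2 False by simp
      qed
      then have "measure_pmf.prob p {k. Rbar b P k \<ge> r} = 0" by (simp add: measure_pmf_zero_iff)
      then show ?thesis using B0 by simp
    qed
  qed
  have "measure_pmf.prob p {k. k \<ge> 1} * r0 \<le> measure_pmf.prob p {k. Rbar b P k \<ge> r0} * r0"
  proof (rule mult_right_mono[OF _ r0])
    show "measure_pmf.prob p {k. k \<ge> 1} \<le> measure_pmf.prob p {k. Rbar b P k \<ge> r0}"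
      by (rule measure_pmf.finite_measure_mono) (auto simp: r0_def intro: Rbar_ge[OF b P])
  qed
  also have "\<dots> = r0 * measure_pmf.prob p {k. Rbar b P k \<ge> r0}" by simp
  also have "\<dots> \<le> Rout b P L pB"
    unfolding Rout_def p_def[symmetric] by (rule cSUP_upper[OF _ bdd]) simp
  finally have 1: "measure_pmf.prob p {k. k \<ge> 1} * Rbar b P 1 \<le> Rout b P L pB" unfolding R1 .
  show ?thesis using 1 prob1 unfolding p_def R1 r0_def by simp
qed

end
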